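(* Let $n\geq 0$, let $\sigma_1,\ldots,\sigma_{n+1}\in\Sigma^*$ and $L_1,\ldots,L_n\subseteq\Sigma^*$, and let $L=\sigma_{n+1}L_n^*\sigma_nL_{n-1}^*\cdots\sigma_2L_1^*\sigma_1$. Then $$\mathrm{cl}\,\mathrm{conv}\,\xi(L)=\mathrm{cl}\,\mathrm{conv}\Big(\xi(\{\sigma_{n+1}\sigma_n\cdots\sigma_1\})\cup\bigcup_{i=1}^n\Gamma^{-1}_{\sigma_i\sigma_{i-1}\cdots\sigma_1}\big(\mathrm{cl}\,\mathrm{conv}\,\xi(L_i)\big)\Big).$$
   Context: Fix an integer base $r\geq 2$ and a dimension $m\geq 1$. Let $\Sigma=\{0,1,\ldots,r-1\}^m$, $\Sigma^*$ the set of finite words over $\Sigma$, $\epsilon$ the empty word, $|\sigma|$ the length of $\sigma$. For $\sigma=b_1\cdots b_k\in\Sigma^*$ define $\rho(\sigma)=\sum_{i=1}^k r^{i-1}b_i\in\mathbb{N}^m$ ($\rho(\epsilon)=0$). For $\sigma\in\Sigma^*$, $\Gamma_\sigma:\mathbb{R}^m\to\mathbb{R}^m$ is $\Gamma_\sigma(x)=r^{|\sigma|}x+\rho(\sigma)$. For a nonempty word $\sigma$, $\xi(\sigma)=\rho(\sigma)/(1-r^{|\sigma|})$; $\xi$ is undefined on $\epsilon$, and for a language $L$, $\xi(L)=\{\xi(\sigma):\sigma\in L,\ \sigma\neq\epsilon\}$ (so $\xi(\{\epsilon\})=\emptyset$). $\mathrm{cl}$ is closure and $\mathrm{conv}$ convex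 hull in $\mathbb{R}^m$. *)

theory Defs
  imports "HOL-Analysis.Analysis"
begin

text \<open>Letters of the alphabet Sigma = {0,...,r-1}^m are vectors in nat^'m with
  every component below r; words are lists of letters, the first list element being b_1.\<close>

definition Sigma_alph :: "nat \<Rightarrow> (nat ^ 'm) set" where
  "Sigma_alph r = {b. \<forall>j. b $ j < r}"

definition rho :: "nat \<Rightarrow> (nat ^ 'm) list \<Rightarrow> real ^ 'm" where
  "rho r w = (\<chi> j. \<Sum>i<length w. real r ^ i * real ((w ! i) $ j))"

definition Gamma :: "nat \<Rightarrow> (nat ^ 'm) list \<Rightarrow> real ^ 'm \<Rightarrow> real ^ 'm" where
  "Gamma r w x = (real r ^ length w) *\<^sub>R x + rho r w"

definition xi :: "nat \<Rightarrow> (nat ^ 'm) list \<Rightarrow> real ^ 'm" where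
  "xi r w = (1 / (1 - real r ^ length w)) *\<^sub>R rho r w"

definition xi_set :: "nat \<Rightarrow> (nat ^ 'm) list set \<Rightarrow> (real ^ 'm) set" where
  "xi_set r L = {xi r w | w. w \<in> L \<and> w \<noteq> []}"

definition lang_conc :: "'a list set \<Rightarrow> 'a list set \<Rightarrow> 'a list set" where
  "lang_conc A B = {u @ v | u v. u \<in> A \<and> v \<in> B}"

definition lang_star :: "'a list set \<Rightarrow> 'a list set" where
  "lang_star A = {concat ws | ws. set ws \<subseteq> A}"

text \<open>chain_lang s L k = s_(k+1) L_k^* s_k L_(k-1)^* ... s_2 L_1^* s_1\<close>
fun chain_lang :: "(nat \<Rightarrow> 'a list) \<Rightarrow> (nat \<Rightarrow> 'a list set) \<Rightarrow> nat \<Rightarrow> 'a list set" where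
  "chain_lang s L 0 = {s 1}"
| "chain_lang s L (Suc k) =
     lang_conc {s (Suc (Suc k))} (lang_conc (lang_star (L (Suc k))) (chain_lang s L k))"

definition word_prod :: "(nat \<Rightarrow> 'a list) \<Rightarrow> nat \<Rightarrow> 'a list" where
  "word_prod s i = concat (map s (rev [1..<Suc i]))"

end

theory Submission
  imports Defs
begin


lemma rho_Nil: "rho r [] = 0"
  by (simp add: rho_def vec_eq_iff)

lemma rho_Cons: "rho r (b#w) = (\<chi> j. real (b$j)) + real r *\<^sub>R rho r w"
  unfolding rho_def vec_eq_iff
  apply (simp only: length_Cons sum.lessThan_Suc_shift)
  by (simp add: sum_distrib_left mult.assoc)

lemma rho_append: "rho r (u@v) = rho r u + (real r ^ length u) *\<^sub>R rho r v"
  by (induction u) (simp_all add: rho_Nil rho_Cons algebra_simps)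



definition gi :: "nat \<Rightarrow> (nat ^ 'm) list \<Rightarrow> real ^ 'm \<Rightarrow> real ^ 'm" where
  "gi r w y = (1 / real r ^ length w) *\<^sub>R (y - rho r w)"

lemma rho_xi: assumes "r \<ge> 2" shows "rho r w = (1 - real r ^ length w) *\<^sub>R xi r w"
proof (cases "w = []")
  case True then show ?thesis by (simp add: rho_Nil)
next
  case False
  then have "real r ^ length w \<ge> 2 ^ length w" using assms by (intro power_mono) auto
  moreover have "(2::real) ^ length w \<ge> 2" using False
    by (metis One_nat_def Suc_leI length_greater_0_conv power_increasing power_one_right one_le_numeral)
  ultimately have "1 - real r ^ length w \<noteq> 0" by linarith
  then show ?thesis by (simp add: xi_def)
qed

lemma gi_append: assumes "r \<ge> 2" shows "gi r (u@v) y = gi r v (gi r u y)"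
  using assms by (simp add: gi_def rho_append power_add algebra_simps)

lemma Gamma_gi: assumes "r \<ge> 2" shows "Gamma r w (gi r w y) = y"
  using assms by (simp add: gi_def Gamma_def)

lemma gi_Gamma: assumes "r \<ge> 2" shows "gi r w (Gamma r w y) = y"
  using assms by (simp add: gi_def Gamma_def)

lemma gi_fix: assumes "r \<ge> 2" shows "gi r w (xi r w) = xi r w"
proof -
  have "xi r w - rho r w = (real r ^ length w) *\<^sub>R xi r w"
    by (subst rho_xi[OF assms]) (simp add: algebra_simps)
  then show ?thesis using assms by (simp add: gi_def)
qed

lemma pow_ge2: assumes "r \<ge> 2" "w \<noteq> []" shows "real r ^ length w \<ge> 2"
proof -
  have "real r ^ length w \<ge> 2 ^ length w" using assms by (intro power_mono) auto
  moreover have "(2::real) ^ length w \<ge> 2" using assms(2)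
    by (metis One_nat_def Suc_leI length_greater_0_conv power_increasing power_one_right one_le_numeral)
  ultimately show ?thesis by linarith
qed

lemma fix_unique: assumes "r \<ge> 2" "w \<noteq> []" "gi r w a = a" shows "a = xi r w"
proof -
  let ?q = "real r ^ length w"
  have q: "?q \<ge> 2" by (rule pow_ge2[OF assms(1,2)])
  have "a - rho r w = ?q *\<^sub>R a"
    using assms(3) q unfolding gi_def by (metis (no_types, lifting) divide_eq_0_iff one_neq_zero
        scaleR_scaleR nonzero_divide_eq_eq scaleR_one zero_neq_numeral not_numeral_le_zero order_trans zero_le_one
        mult.commute)
  then have "(1 - ?q) *\<^sub>R a = rho r w" by (simp add: algebra_simps)
  also have "\<dots> = (1 - ?q) *\<^sub>R xi r w" by (rule rho_xi[OF assms(1)])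
  finally show ?thesis using q by simp
qed

lemma gi_affine: assumes "u + v = 1"
  shows "gi r w (u *\<^sub>R x + v *\<^sub>R y) = u *\<^sub>R gi r w x + v *\<^sub>R gi r w y"
proof -
  have "u *\<^sub>R x + v *\<^sub>R y - rho r w = u *\<^sub>R (x - rho r w) + v *\<^sub>R (y - rho r w)"
    using assms by (simp add: algebra_simps flip: scaleR_add_left)
  then show ?thesis unfolding gi_def by (simp only: scaleR_add_right scaleR_scaleR mult.commute)
qed

lemma gi_comb: assumes "r \<ge> 2"
  shows "gi r u z = (1 / real r ^ length u) *\<^sub>R z + (1 - 1 / real r ^ length u) *\<^sub>R xi r u"
proof -
  have "gi r u z = (1 / real r ^ length u) *\<^sub>R z - (1 / real r ^ length u) *\<^sub>R ((1 - real r ^ length u) *\<^sub>R xi r u)"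
    unfolding gi_def by (subst rho_xi[OF assms]) (simp add: algebra_simps)
  also have "\<dots> = (1 / real r ^ length u) *\<^sub>R z + (1 - 1 / real r ^ length u) *\<^sub>R xi r u"
    using assms by (simp add: algebra_simps diff_divide_distrib)
  finally show ?thesis .
qed



lemma xi_append: assumes "r \<ge> 2"
  shows "xi r (a@b) = ((1 - real r ^ length a) / (1 - real r ^ length a * real r ^ length b)) *\<^sub>R xi r a
     + (real r ^ length a * (1 - real r ^ length b) / (1 - real r ^ length a * real r ^ length b)) *\<^sub>R xi r b"
proof -
  have "rho r (a@b) = (1 - real r ^ length a) *\<^sub>R xi r a + (real r ^ length a * (1 - real r ^ length b)) *\<^sub>R xi r b"
    by (simp add: rho_append rho_xi[OF assms, of a] rho_xi[OF assms, of b])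
  then show ?thesis unfolding xi_def[of r "a@b"]
    by (simp add: power_add scaleR_add_right divide_inverse mult.commute)
qed

lemma xi_append_conv: assumes "r \<ge> 2" "a \<noteq> []" "b \<noteq> []"
  shows "\<exists>u v. u \<ge> 0 \<and> v \<ge> 0 \<and> u + v = 1 \<and> xi r (a@b) = u *\<^sub>R xi r a + v *\<^sub>R xi r b"
proof -
  let ?p = "real r ^ length a" and ?q = "real r ^ length b"
  have p: "?p \<ge> 2" and q: "?q \<ge> 2" using pow_ge2 assms by auto
  have pq: "?p * ?q \<ge> 4" using mult_mono[OF p q] by simp
  show ?thesis
    apply (rule exI[of _ "(1 - ?p) / (1 - ?p * ?q)"])
    apply (rule exI[of _ "?p * (1 - ?q) / (1 - ?p * ?q)"])
    using p q pq apply (intro conjI)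
       apply (simp add: divide_nonneg_nonpos divide_nonpos_nonpos)
      apply (simp add: divide_nonneg_nonpos divide_nonpos_nonpos mult_nonneg_nonpos)
    apply (simp add: field_simps)
    by (rule xi_append[OF assms(1)])
qed

lemma xi_rot: assumes "r \<ge> 2" "x@y \<noteq> []" shows "xi r (x@y) = gi r y (xi r (y@x))"
proof -
  have "gi r (x@y) (gi r y (xi r (y@x))) = gi r y (gi r (y@x) (xi r (y@x)))"
    by (simp add: gi_append[OF assms(1)])
  also have "\<dots> = gi r y (xi r (y@x))" by (simp add: gi_fix[OF assms(1)])
  finally show ?thesis using fix_unique[OF assms(1,2)] by metis
qed

lemma xi_pow: assumes "r \<ge> 2" "v \<noteq> []" shows "xi r (concat (replicate (Suc k) v)) = xi r v"
proof -
  have "gi r (concat (replicate k v)) (xi r v) = xi r v" for k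
  proof (induction k)
    case 0 then show ?case by (simp add: gi_def rho_Nil)
  next
    case (Suc k) then show ?case by (simp add: gi_append[OF assms(1)] gi_fix[OF assms(1)])
  qed
  then have "gi r (concat (replicate (Suc k) v)) (xi r v) = xi r v" .
  then show ?thesis using fix_unique[OF assms(1)] assms(2) by (metis
        append_is_Nil_conv concat.simps(2) replicate_Suc)
qed

lemma xi_star: assumes "r \<ge> 2" "u \<in> lang_star A" "u \<noteq> []"
  shows "xi r u \<in> convex hull (xi_set r A)"
proof -
  have "\<forall>ws. set ws \<subseteq> A \<longrightarrow> concat ws \<noteq> [] \<longrightarrow> xi r (concat ws) \<in> convex hull (xi_set r A)"
  proof
    fix ws show "set ws \<subseteq> A \<longrightarrow> concat ws \<noteq> [] \<longrightarrow> xi r (concat ws) \<in> convex hull (xi_set r A)"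
    proof (induction ws)
      case Nil then show ?case by simp
    next
      case (Cons w ws)
      show ?case
      proof (intro impI)
        assume h: "set (w # ws) \<subseteq> A" "concat (w # ws) \<noteq> []"
        show "xi r (concat (w # ws)) \<in> convex hull (xi_set r A)"
        proof (cases "w = []")
          case True then show ?thesis using Cons h by simp
        next
          case wne: False
          have wA: "xi r w \<in> convex hull (xi_set r A)"
            using h wne by (intro hull_inc) (auto simp: xi_set_def)
          show ?thesis
          proof (cases "concat ws = []")
            case True
            then have "concat (w # ws) = w" by simp
            then show ?thesis using wA by (simp only:)
          next
            case False
            then have ih: "xi r (concat ws) \<in> convex hull (xi_set r A)" using Cons h by simp
            obtain a b where ab: "a \<ge> 0" "b \<ge> 0" "a + b = 1" "xi r (w @ concat ws) = a *\<^sub>R xi r w + b *\<^sub>R xi r (concat ws)"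
              using xi_append_conv[OF assms(1) wne False] by blast
            show ?thesis using convexD[OF convex_convex_hull wA ih ab(1,2,3)] ab(4) by simp
          qed
        qed
      qed
    qed
  qed
  then show ?thesis using assms(2,3) unfolding lang_star_def by blast
qed



lemma word_prod_Suc: "word_prod s (Suc i) = s (Suc i) @ word_prod s i"
  by (simp add: word_prod_def)

lemma word_prod_1: "word_prod s (Suc 0) = s (Suc 0)"
  by (simp add: word_prod_def)

lemma gi_Nil: "gi r [] y = y"
  by (simp add: gi_def rho_Nil)

definition MM :: "nat \<Rightarrow> (nat \<Rightarrow> (nat ^ 'm) list) \<Rightarrow> (nat \<Rightarrow> (nat ^ 'm) list set) \<Rightarrow> nat \<Rightarrow> (real ^ 'm) set" where
  "MM r s L n = closure (convex hull (\<Union>i\<in>{1..n}. {x. Gamma r (word_prod s i) x \<in> closure (convex hull (xi_set r (L i)))}))"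

lemma MM_mono: "MM r s L n \<subseteq> MM r s L (Suc n)"
  unfolding MM_def by (intro closure_mono hull_mono UN_mono) auto

lemma convex_MM: "convex (MM r s L n)"
  unfolding MM_def by (simp add: convex_closure)

lemma claim:
  assumes r: "r \<ge> 2" and c: "c \<in> chain_lang s L n"
  shows "\<exists>l m. l = real r ^ length (word_prod s (Suc n)) / real r ^ length c \<and> 0 < l \<and> l \<le> 1
     \<and> (l < 1 \<longrightarrow> m \<in> MM r s L n)
     \<and> (\<forall>y. gi r c y = l *\<^sub>R gi r (word_prod s (Suc n)) y + (1 - l) *\<^sub>R m)"
  using c
proof (induction n arbitrary: c)
  case 0
  then have "c = s 1" by simp
  then show ?case using r by (intro exI[of _ 1] exI[of _ 0]) (simp add: word_prod_1)
next
  case (Suc n)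
  from Suc.prems obtain u c' where uc: "c = s (Suc (Suc n)) @ u @ c'" "u \<in> lang_star (L (Suc n))"
    "c' \<in> chain_lang s L n"
    by (auto simp: lang_conc_def)
  let ?R = "real r"
  let ?sg = "s (Suc (Suc n))"
  let ?P1 = "word_prod s (Suc n)" and ?P2 = "word_prod s (Suc (Suc n))"
  obtain l' m' where ih: "l' = ?R ^ length ?P1 / ?R ^ length c'" "0 < l'" "l' \<le> 1"
    "l' < 1 \<longrightarrow> m' \<in> MM r s L n" "\<forall>y. gi r c' y = l' *\<^sub>R gi r ?P1 y + (1 - l') *\<^sub>R m'"
    using Suc.IH[OF uc(3)] by blast
  define mu where "mu = 1 / ?R ^ length u"
  define g where "g = gi r ?P1 (xi r u)"
  define l where "l = l' * mu"
  define m where "m = (l' * (1 - mu) / (1 - l)) *\<^sub>R g + ((1 - l') / (1 - l)) *\<^sub>R m'"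
  have Rpos: "?R > 0" using r by simp
  have mu: "0 < mu" "mu \<le> 1" using r by (auto simp: mu_def)
  have mu1: "mu < 1" if "u \<noteq> []"
  proof -
    have "?R ^ length u \<ge> 2" using pow_ge2[OF r that] .
    then show ?thesis unfolding mu_def by (simp add: divide_less_eq)
  qed
  have mu0: "u = [] \<Longrightarrow> mu = 1" by (simp add: mu_def)
  have lval: "l = ?R ^ length ?P2 / ?R ^ length c"
    using Rpos unfolding l_def ih(1) mu_def uc(1) word_prod_Suc[of s "Suc n"]
    by (simp add: power_add field_simps)
  have l: "0 < l" "l \<le> 1" using ih(2,3) mu by (auto simp: l_def mult_le_one)
  have eq: "gi r c y = l *\<^sub>R gi r ?P2 y + (1 - l) *\<^sub>R m" for y
  proof -
    have "gi r c y = gi r c' (gi r u (gi r ?sg y))"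
      unfolding uc(1) by (simp add: gi_append[OF r])
    also have "\<dots> = l' *\<^sub>R gi r ?P1 (mu *\<^sub>R gi r ?sg y + (1 - mu) *\<^sub>R xi r u) + (1 - l') *\<^sub>R m'"
      unfolding mu_def by (simp only: ih(5) gi_comb[OF r, of u])
    also have "\<dots> = l' *\<^sub>R (mu *\<^sub>R gi r ?P2 y + (1 - mu) *\<^sub>R g) + (1 - l') *\<^sub>R m'"
      by (simp add: gi_affine g_def word_prod_Suc[of s "Suc n"] gi_append[OF r])
    also have "\<dots> = l *\<^sub>R gi r ?P2 y + ((l' * (1 - mu)) *\<^sub>R g + (1 - l') *\<^sub>R m')"
      by (simp add: l_def algebra_simps)
    also have "(l' * (1 - mu)) *\<^sub>R g + (1 - l') *\<^sub>R m' = (1 - l) *\<^sub>R m"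
    proof (cases "l = 1")
      case True
      have a: "l' * mu \<le> l'" using ih(2) mu(2) by (simp add: mult_left_le)
      have b: "l' * mu \<le> mu" using ih(3) mu(1) by (simp add: mult_left_le_one_le)
      have "l' = 1" "mu = 1" using a b True ih(3) mu(2) unfolding l_def by linarith+
      then show ?thesis using True by simp
    next
      case False
      then show ?thesis by (simp add: m_def scaleR_add_right)
    qed
    finally show ?thesis .
  qed
  have mM: "m \<in> MM r s L (Suc n)" if "l < 1"
  proof (cases "u = []")
    case True
    then have "mu = 1" by (rule mu0)
    then have "m = m'" "l' < 1" using that by (auto simp: m_def l_def)
    then show ?thesis using ih(4) MM_mono[of r s L n] by auto
  next
    case False
    have gM: "g \<in> MM r s L (Suc n)"
    proof -
      have "Gamma r ?P1 g = xi r u" by (simp add: g_def Gamma_gi[OF r])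
      also have "\<dots> \<in> closure (convex hull (xi_set r (L (Suc n))))"
        using xi_star[OF r uc(2) False] closure_subset by blast
      finally show ?thesis unfolding MM_def
        by (intro subsetD[OF closure_subset] hull_inc) auto
    qed
    show ?thesis
    proof (cases "l' = 1")
      case True
      then have "m = g" using mu1[OF False] by (simp add: m_def l_def)
      then show ?thesis using gM by simp
    next
      case False
      then have l'1: "l' < 1" using ih(3) by simp
      have "m' \<in> MM r s L (Suc n)" using ih(4) l'1 MM_mono[of r s L n] by auto
      moreover have "l' * (1 - mu) / (1 - l) \<ge> 0" "(1 - l') / (1 - l) \<ge> 0"
        using ih(2) l'1 mu that by auto
      moreover have "l' * (1 - mu) / (1 - l) + (1 - l') / (1 - l) = 1"
        using that by (simp add: l_def field_simps)
      ultimately show ?thesis unfolding m_def using convexD[OF convex_MM gM] by blast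
    qed
  qed
  show ?case using lval l eq mM by blast
qed



lemma xi_in_K:
  assumes r: "r \<ge> 2" and c: "c \<in> chain_lang s L n" and cne: "c \<noteq> []"
  shows "xi r c \<in> closure (convex hull (xi_set r {word_prod s (Suc n)} \<union>
           (\<Union>i\<in>{1..n}. {x. Gamma r (word_prod s i) x \<in> closure (convex hull (xi_set r (L i)))})))"
    (is "_ \<in> ?K")
proof -
  let ?R = "real r" and ?P = "word_prod s (Suc n)"
  obtain l m where lm: "l = ?R ^ length ?P / ?R ^ length c" "0 < l" "l \<le> 1"
     "l < 1 \<longrightarrow> m \<in> MM r s L n" "\<forall>y. gi r c y = l *\<^sub>R gi r ?P y + (1 - l) *\<^sub>R m"
    using claim[OF r c] by blast
  define x where "x = xi r c"
  have fx: "x = l *\<^sub>R gi r ?P x + (1 - l) *\<^sub>R m"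
    using lm(5) gi_fix[OF r, of c] unfolding x_def by metis
  have MK: "MM r s L n \<subseteq> ?K" unfolding MM_def by (intro closure_mono hull_mono) auto
  have convK: "convex ?K" by (simp add: convex_closure)
  have PK: "?P \<noteq> [] \<Longrightarrow> xi r ?P \<in> ?K"
    by (intro subsetD[OF closure_subset] hull_inc) (auto simp: xi_set_def)
  show ?thesis
  proof (cases "l = 1")
    case True
    have Pne: "?P \<noteq> []"
    proof
      assume "?P = []"
      then have "l = 1 / ?R ^ length c" using lm(1) by simp
      moreover have "?R ^ length c \<ge> 2" using pow_ge2[OF r cne] .
      ultimately have "l < 1" by (simp add: divide_less_eq)
      then show False using True by simp
    qed
    have "gi r ?P x = x" using fx True by simp
    then have "x = xi r ?P" using fix_unique[OF r Pne] by blast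
    then show ?thesis using PK[OF Pne] x_def by simp
  next
    case False
    then have l1: "l < 1" using lm(3) by simp
    have mK: "m \<in> ?K" using lm(4) l1 MK by auto
    show ?thesis
    proof (cases "?P = []")
      case True
      then have "x = l *\<^sub>R x + (1 - l) *\<^sub>R m" using fx by (simp add: gi_Nil)
      then have "(1 - l) *\<^sub>R x = (1 - l) *\<^sub>R m" by (simp add: algebra_simps)
      then have "x = m" using l1 by simp
      then show ?thesis using mK x_def by simp
    next
      case Pne: False
      define q where "q = ?R ^ length ?P"
      have q: "q \<ge> 2" unfolding q_def using pow_ge2[OF r Pne] .
      have xq: "x = l *\<^sub>R ((1 / q) *\<^sub>R x + (1 - 1 / q) *\<^sub>R xi r ?P) + (1 - l) *\<^sub>R m"
        using fx gi_comb[OF r, of ?P x] unfolding q_def by simp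
      define a where "a = 1 - l / q"
      have e: "a *\<^sub>R x = (l * (1 - 1 / q)) *\<^sub>R xi r ?P + (1 - l) *\<^sub>R m"
        unfolding a_def using xq by (simp add: algebra_simps)
      have pos: "a > 0" unfolding a_def using q l1 lm(2) by (simp add: field_simps)
      have "x = (1 / a) *\<^sub>R (a *\<^sub>R x)" using pos by simp
      then have "x = (1 / a) *\<^sub>R ((l * (1 - 1 / q)) *\<^sub>R xi r ?P + (1 - l) *\<^sub>R m)"
        by (simp only: e)
      then have xe: "x = ((l * (1 - 1 / q)) / a) *\<^sub>R xi r ?P + ((1 - l) / a) *\<^sub>R m"
        by (simp only: scaleR_add_right scaleR_scaleR) simp
      have c1: "(l * (1 - 1 / q)) / a \<ge> 0" using pos q lm(2) by simp
      have c2: "(1 - l) / a \<ge> 0" using pos l1 by simp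
      have c3: "(l * (1 - 1 / q)) / a + (1 - l) / a = 1"
      proof -
        have "l * (1 - 1 / q) + (1 - l) = a" unfolding a_def by (simp add: algebra_simps)
        then have "(l * (1 - 1 / q)) / a + (1 - l) / a = a / a" by (simp add: add_divide_distrib[symmetric])
        then show ?thesis using pos by simp
      qed
      show ?thesis using convexD[OF convK PK[OF Pne] mK c1 c2 c3] xe x_def by simp
    qed
  qed
qed



lemma Nil_star: "[] \<in> lang_star A"
  unfolding lang_star_def by (rule CollectI, rule exI[of _ "[]"]) simp

lemma rep_star: "v \<in> A \<Longrightarrow> concat (replicate k v) \<in> lang_star A"
  unfolding lang_star_def by (rule CollectI, rule exI[of _ "replicate k v"]) auto

lemma lang_conc_I: "u \<in> A \<Longrightarrow> v \<in> B \<Longrightarrow> u @ v \<in> lang_conc A B"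
  unfolding lang_conc_def by blast

lemma chain_SucI: "u \<in> lang_star (L (Suc n)) \<Longrightarrow> c \<in> chain_lang s L n \<Longrightarrow>
   s (Suc (Suc n)) @ u @ c \<in> chain_lang s L (Suc n)"
  unfolding chain_lang.simps by (intro lang_conc_I) auto

lemma P_in_chain: "word_prod s (Suc n) \<in> chain_lang s L n"
proof (induction n)
  case 0 then show ?case by (simp add: word_prod_1)
next
  case (Suc n)
  have "s (Suc (Suc n)) @ [] @ word_prod s (Suc n) \<in> chain_lang s L (Suc n)"
    by (rule chain_SucI[OF Nil_star Suc.IH])
  then show ?case by (simp add: word_prod_Suc[of s "Suc n"])
qed

lemma Q_exists: "i \<in> {1..n} \<Longrightarrow> \<exists>Q. \<forall>u\<in>lang_star (L i). Q @ u @ word_prod s i \<in> chain_lang s L n"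
proof (induction n)
  case 0 then show ?case by simp
next
  case (Suc n)
  show ?case
  proof (cases "i = Suc n")
    case True
    show ?thesis
      apply (rule exI[of _ "s (Suc (Suc n))"])
      using chain_SucI[OF _ P_in_chain[of s n L]] True by auto
  next
    case False
    then obtain Q where Q: "\<forall>u\<in>lang_star (L i). Q @ u @ word_prod s i \<in> chain_lang s L n"
      using Suc by auto
    show ?thesis
    proof (rule exI[of _ "s (Suc (Suc n)) @ Q"], intro ballI)
      fix u assume "u \<in> lang_star (L i)"
      then have "Q @ u @ word_prod s i \<in> chain_lang s L n" using Q by blast
      from chain_SucI[OF Nil_star this]
      show "(s (Suc (Suc n)) @ Q) @ u @ word_prod s i \<in> chain_lang s L (Suc n)" by simp
    qed
  qed
qed



lemma alpha_lim:
  fixes qa R :: real and l :: nat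
  assumes qa: "qa \<ge> 1" and R: "R \<ge> 2" and l: "l \<ge> 1"
  shows "(\<lambda>k. (1 - qa) / (1 - qa * R ^ (Suc k * l))) \<longlonglongrightarrow> 0"
proof (rule tendsto_sandwich[of "\<lambda>_. 0" _ _ "\<lambda>k. inverse (real (Suc k))"])
  have b: "R ^ (Suc k * l) \<ge> real (Suc k) + 1" for k
  proof -
    have "Suc k * 1 \<le> Suc k * l" using l by (rule mult_le_mono2)
    then have "R ^ (Suc k * l) \<ge> R ^ Suc k" using R by (intro power_increasing) auto
    moreover have "R ^ Suc k \<ge> 2 ^ Suc k" using R by (intro power_mono) auto
    moreover have "real (Suc k) < 2 ^ Suc k"
      using less_exp[of "Suc k"] by (metis of_nat_less_iff of_nat_numeral of_nat_power)
    moreover have "real (Suc k) + 1 \<le> 2 ^ Suc k"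
    proof -
      have "Suc k + 1 \<le> (2::nat) ^ Suc k" using less_exp[of "Suc k"] by simp
      then have "real (Suc k + 1) \<le> real ((2::nat) ^ Suc k)" by (simp only: of_nat_le_iff)
      then show ?thesis by simp
    qed
    ultimately show ?thesis by linarith
  qed
  show "\<forall>\<^sub>F k in sequentially. 0 \<le> (1 - qa) / (1 - qa * R ^ (Suc k * l))"
  proof (rule always_eventually, rule allI)
    fix k
    have "qa * R ^ (Suc k * l) \<ge> 1 * 2" using b[of k] qa by (intro mult_mono) auto
    then show "0 \<le> (1 - qa) / (1 - qa * R ^ (Suc k * l))" using qa
      by (intro divide_nonpos_nonpos) auto
  qed
  show "\<forall>\<^sub>F k in sequentially. (1 - qa) / (1 - qa * R ^ (Suc k * l)) \<le> inverse (real (Suc k))"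
  proof (rule always_eventually, rule allI)
    fix k
    let ?B = "R ^ (Suc k * l)"
    have "qa * ?B \<ge> qa * (real (Suc k) + 1)" using b[of k] qa by (intro mult_left_mono) auto
    then have den: "qa * ?B - 1 \<ge> qa * real (Suc k)" using qa by (simp add: algebra_simps)
    have "qa * real (Suc k) > 0" using qa by simp
    have "(1 - qa) / (1 - qa * ?B) = (qa - 1) / (qa * ?B - 1)"
      by (metis minus_diff_eq minus_divide_divide)
    also have "\<dots> \<le> (qa - 1) / (qa * real (Suc k))"
    proof (rule divide_left_mono)
      show "qa * real (Suc k) \<le> qa * ?B - 1" by (rule den)
      show "0 \<le> qa - 1" using qa by simp
      show "0 < (qa * ?B - 1) * (qa * real (Suc k))"
      proof -
        have "0 < qa * ?B - 1" using den \<open>qa * real (Suc k) > 0\<close> by linarith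
        then show ?thesis using \<open>qa * real (Suc k) > 0\<close> by (rule mult_pos_pos)
      qed
    qed
    also have "\<dots> \<le> qa / (qa * real (Suc k))"
      using \<open>qa * real (Suc k) > 0\<close> by (intro divide_right_mono) auto
    also have "\<dots> = inverse (real (Suc k))" using qa by (simp add: divide_inverse)
    finally show "(1 - qa) / (1 - qa * ?B) \<le> inverse (real (Suc k))" .
  qed
  show "(\<lambda>_. 0) \<longlonglongrightarrow> (0::real)" by simp
  show "(\<lambda>k. inverse (real (Suc k))) \<longlonglongrightarrow> 0" by (rule LIMSEQ_inverse_real_of_nat)
qed

lemma lim_closure:
  assumes r: "r \<ge> 2" and v: "v \<noteq> []" and C: "\<forall>k. Q @ concat (replicate (Suc k) v) @ P \<in> C"
  shows "gi r P (xi r v) \<in> closure (xi_set r C)"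
proof -
  let ?R = "real r"
  define V where "V k = concat (replicate (Suc k) v)" for k
  define qa where "qa = ?R ^ length (P @ Q)"
  define al where "al k = (1 - qa) / (1 - qa * ?R ^ (Suc k * length v))" for k
  define f where "f k = xi r (Q @ V k @ P)" for k
  have Vne: "V k \<noteq> []" for k using v by (simp add: V_def)
  have lenV: "length (V k) = Suc k * length v" for k by (simp add: V_def length_concat sum_list_replicate)
  have qa: "qa \<ge> 1" unfolding qa_def using r by simp
  have fS: "f k \<in> xi_set r C" for k
    using C Vne unfolding f_def xi_set_def V_def by blast
  have feq: "f k = gi r P (al k *\<^sub>R xi r (P @ Q) + (1 - al k) *\<^sub>R xi r v)" for k
  proof -
    have "f k = xi r ((Q @ V k) @ P)" by (simp add: f_def)
    also have "\<dots> = gi r P (xi r (P @ (Q @ V k)))" by (rule xi_rot[OF r]) (simp add: Vne)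
    also have "xi r (P @ (Q @ V k)) = xi r ((P @ Q) @ V k)" by simp
    also have "\<dots> = al k *\<^sub>R xi r (P @ Q) + (1 - al k) *\<^sub>R xi r (V k)"
    proof -
      let ?qb = "?R ^ length (V k)"
      have qb: "?qb \<ge> 2" using pow_ge2[OF r Vne] .
      have "qa * ?qb \<ge> 1 * 2" using qa qb by (intro mult_mono) auto
      then have ne: "1 - qa * ?qb \<noteq> 0" by linarith
      have "qa * (1 - ?qb) / (1 - qa * ?qb) = 1 - al k"
        unfolding al_def lenV[symmetric] using ne by (simp add: field_simps)
      then show ?thesis using xi_append[OF r, of "P @ Q" "V k"]
        unfolding al_def lenV[symmetric] qa_def by simp
    qed
    also have "xi r (V k) = xi r v" unfolding V_def by (rule xi_pow[OF r v])
    finally show ?thesis .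
  qed
  have al: "al \<longlonglongrightarrow> 0" unfolding al_def using alpha_lim[OF qa, of ?R "length v"] r v
    by (simp add: Suc_leI)
  have "(\<lambda>k. gi r P (al k *\<^sub>R xi r (P @ Q) + (1 - al k) *\<^sub>R xi r v))
      \<longlonglongrightarrow> gi r P ((0::real) *\<^sub>R xi r (P @ Q) + (1 - 0) *\<^sub>R xi r v)"
    unfolding gi_def by (intro tendsto_intros al)
  moreover have "f = (\<lambda>k. gi r P (al k *\<^sub>R xi r (P @ Q) + (1 - al k) *\<^sub>R xi r v))"
    by (rule ext, rule feq)
  ultimately have "f \<longlonglongrightarrow> gi r P (xi r v)" by simp
  then show ?thesis unfolding closure_sequential using fS by blast
qed



theorem proposition2:
  fixes r n :: nat
    and s :: "nat \<Rightarrow> (nat ^ 'm) list"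
    and L :: "nat \<Rightarrow> (nat ^ 'm) list set"
  assumes "r \<ge> 2"
    and "\<forall>i\<in>{1..n+1}. set (s i) \<subseteq> Sigma_alph r"
    and "\<forall>i\<in>{1..n}. L i \<subseteq> lists (Sigma_alph r)"
  shows "closure (convex hull (xi_set r (chain_lang s L n))) =
         closure (convex hull (xi_set r {word_prod s (n+1)} \<union>
           (\<Union>i\<in>{1..n}. {x. Gamma r (word_prod s i) x \<in> closure (convex hull (xi_set r (L i)))})))"
    (is "?T = ?K")
proof
  have r: "r \<ge> 2" by (rule assms(1))
  show "?T \<subseteq> ?K"
  proof (rule closure_minimal)
    show "closed ?K" by simp
    show "convex hull (xi_set r (chain_lang s L n)) \<subseteq> ?K"
    proof (rule hull_minimal)
      show "convex ?K" by (simp add: convex_closure)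
      show "xi_set r (chain_lang s L n) \<subseteq> ?K"
      proof
        fix x assume "x \<in> xi_set r (chain_lang s L n)"
        then obtain c where c: "x = xi r c" "c \<in> chain_lang s L n" "c \<noteq> []"
          unfolding xi_set_def by blast
        show "x \<in> ?K" using xi_in_K[OF r c(2,3)] c(1) by simp
      qed
    qed
  qed
next
  have r: "r \<ge> 2" by (rule assms(1))
  have cT: "convex ?T" by (simp add: convex_closure)
  have clT: "closed ?T" by simp
  have sub: "closure (xi_set r (chain_lang s L n)) \<subseteq> ?T"
    by (intro closure_mono hull_subset)
  show "?K \<subseteq> ?T"
  proof (intro closure_minimal hull_minimal Un_least UN_least subsetI clT cT)
    fix x assume "x \<in> xi_set r {word_prod s (n+1)}"
    then have "x \<in> xi_set r (chain_lang s L n)"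
      using P_in_chain[of s n L] unfolding xi_set_def by auto
    then show "x \<in> ?T" using sub closure_subset by blast
  next
    fix i x assume i: "i \<in> {1..n}"
      and x: "x \<in> {x. Gamma r (word_prod s i) x \<in> closure (convex hull (xi_set r (L i)))}"
    let ?P = "word_prod s i"
    obtain Q where Q: "\<forall>u\<in>lang_star (L i). Q @ u @ ?P \<in> chain_lang s L n"
      using Q_exists[OF i] by blast
    have img: "gi r ?P ` closure (convex hull (xi_set r (L i))) \<subseteq> ?T"
    proof (rule image_closure_subset)
      show "continuous_on (closure (convex hull xi_set r (L i))) (gi r ?P)"
        unfolding gi_def by (intro continuous_intros)
      show "closed ?T" by (rule clT)
      have "convex hull (xi_set r (L i)) \<subseteq> {z. gi r ?P z \<in> ?T}"
      proof (rule hull_minimal)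
        show "xi_set r (L i) \<subseteq> {z. gi r ?P z \<in> ?T}"
        proof
          fix z assume "z \<in> xi_set r (L i)"
          then obtain v where v: "z = xi r v" "v \<in> L i" "v \<noteq> []" unfolding xi_set_def by blast
          have "\<forall>k. Q @ concat (replicate (Suc k) v) @ ?P \<in> chain_lang s L n"
            using Q rep_star[OF v(2)] by blast
          from lim_closure[OF r v(3) this] sub v(1)
          show "z \<in> {z. gi r ?P z \<in> ?T}" by auto
        qed
        show "convex {z. gi r ?P z \<in> ?T}"
        proof (rule convexI)
          fix a b and u v :: real
          assume "a \<in> {z. gi r ?P z \<in> ?T}" "b \<in> {z. gi r ?P z \<in> ?T}" "0 \<le> u" "0 \<le> v" "u + v = 1"
          then show "u *\<^sub>R a + v *\<^sub>R b \<in> {z. gi r ?P z \<in> ?T}"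
            using convexD[OF cT] gi_affine[of u v r ?P a b] by simp
        qed
      qed
      then show "gi r ?P ` (convex hull (xi_set r (L i))) \<subseteq> ?T" by auto
    qed
    have "x = gi r ?P (Gamma r ?P x)" by (simp add: gi_Gamma[OF r])
    then show "x \<in> ?T" using img x by auto
  qed
qed


end
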